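(* As operators on the tensor product of any two finite-dimensional spin representations of $U_q(\mathfrak{su}_2)$, $$Q_2:=1\otimes Q=\mathrm{Tr}_a\big(L^+_{a1}L^+_{a2}L^-_{a2}(L^+_{a1})^{-1}M_a\big),$$ where $Q=(q-q^{-1})^2FE+q^{2H+1}+q^{-2H-1}$.
   Context: $q$ generic complex, $U_q(\mathfrak{su}_2)$ generated by $E,F,q^H$ with $q^HE=qEq^H$, $q^HF=q^{-1}Fq^H$, $[E,F]=(q^{2H}-q^{-2H})/(q-q^{-1})$. An auxiliary space $a\cong\mathbb{C}^2$ (spin $1/2$) is traced over with $\mathrm{Tr}_a$. $L^-$ and $L^+$ are the $2\times2$ matrices with entries in $U_q(\mathfrak{su}_2)$ $$L^-=\begin{pmatrix}q^H&0\\ \frac{q-q^{-1}}{q^{1/2}}E&q^{-H}\end{pmatrix},\qquad L^+=\begin{pmatrix}q^H&\frac{q-q^{-1}}{q^{1/2}}F\\0&q^{-H}\end{pmatrix}$$ (these are the universal $R$-matrix $\mathcal{R}$, resp. $\mathcal{R}_{21}$, with first factor in the spin-$1/2$ representation). $L^\pm_{ai}$ denotes the matrix acting on space $a$ with entries placed in the $i$-th tensor factor; $M_a=\mathrm{diag}(q,q^{-1})$ acting on space $a$. *)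

theory Defs
  imports "Jordan_Normal_Form.Matrix" Complex_Main
begin

text \<open>We parametrise by s = q^(1/2) (a fixed square root of q), so q = s^2.
The spin-j representation V_j (j = n/2, n :: nat) is realised on C^(n+1) with basis
e_0,...,e_n, where e_k has weight m = k - n/2 (so 2m = 2k - n is an integer).
  q^(aH+b) e_k = s^(a(2k-n)+2b) e_k,  E e_k = e_(k+1),  F e_k = [k][n-k+1] e_(k-1),
with [x] = (q^x - q^(-x))/(q - q^(-1)).\<close>

definition qint :: "complex \<Rightarrow> int \<Rightarrow> complex" where
  "qint s x = ((s^2) powi x - (s^2) powi (-x)) / (s^2 - inverse (s^2))"

definition spin_qH :: "complex \<Rightarrow> nat \<Rightarrow> int \<Rightarrow> int \<Rightarrow> complex mat" where
  "spin_qH s n a b = mat (n+1) (n+1)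
     (\<lambda>(i,j). if i = j then s powi (a * (2 * int i - int n) + 2 * b) else 0)"

definition spin_E :: "nat \<Rightarrow> complex mat" where
  "spin_E n = mat (n+1) (n+1) (\<lambda>(i,j). if i = j + 1 then 1 else 0)"

definition spin_F :: "complex \<Rightarrow> nat \<Rightarrow> complex mat" where
  "spin_F s n = mat (n+1) (n+1)
     (\<lambda>(i,j). if j = i + 1 then qint s (int j) * qint s (int n - int j + 1) else 0)"

definition casimir_Q :: "complex \<Rightarrow> nat \<Rightarrow> complex mat" where
  "casimir_Q s n = (s^2 - inverse (s^2))^2 \<cdot>\<^sub>m (spin_F s n * spin_E n)
      + spin_qH s n 2 1 + spin_qH s n (-2) (-1)"

text \<open>Kronecker (tensor) product of matrices; index (i,k) of A \<otimes> B is i * dim B + k.\<close>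
definition kron :: "complex mat \<Rightarrow> complex mat \<Rightarrow> complex mat" where
  "kron A B = mat (dim_row A * dim_row B) (dim_col A * dim_col B)
     (\<lambda>(i,j). A $$ (i div dim_row B, j div dim_col B) * B $$ (i mod dim_row B, j mod dim_col B))"

definition unit2 :: "nat \<Rightarrow> nat \<Rightarrow> complex mat" where
  "unit2 \<alpha> \<beta> = mat 2 2 (\<lambda>(i,j). if i = \<alpha> \<and> j = \<beta> then 1 else 0)"

definition L_plus :: "complex \<Rightarrow> nat \<Rightarrow> nat \<Rightarrow> nat \<Rightarrow> complex mat" where
  "L_plus s n \<alpha> \<beta> =
     (if \<alpha> = 0 \<and> \<beta> = 0 then spin_qH s n 1 0
      else if \<alpha> = 0 \<and> \<beta> = 1 then ((s^2 - inverse (s^2)) / s) \<cdot>\<^sub>m spin_F s n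
      else if \<alpha> = 1 \<and> \<beta> = 0 then 0\<^sub>m (n+1) (n+1)
      else spin_qH s n (-1) 0)"

definition L_minus :: "complex \<Rightarrow> nat \<Rightarrow> nat \<Rightarrow> nat \<Rightarrow> complex mat" where
  "L_minus s n \<alpha> \<beta> =
     (if \<alpha> = 0 \<and> \<beta> = 0 then spin_qH s n 1 0
      else if \<alpha> = 0 \<and> \<beta> = 1 then 0\<^sub>m (n+1) (n+1)
      else if \<alpha> = 1 \<and> \<beta> = 0 then ((s^2 - inverse (s^2)) / s) \<cdot>\<^sub>m spin_E n
      else spin_qH s n (-1) 0)"

text \<open>X_(a1) and X_(a2) as operators on a \<otimes> V1 \<otimes> V2 (dims d1, d2 of V1, V2).\<close>
definition on_a1 :: "nat \<Rightarrow> nat \<Rightarrow> (nat \<Rightarrow> nat \<Rightarrow> complex mat) \<Rightarrow> complex mat" where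
  "on_a1 d1 d2 X =
       kron (kron (unit2 0 0) (X 0 0)) (1\<^sub>m d2) + kron (kron (unit2 0 1) (X 0 1)) (1\<^sub>m d2)
     + kron (kron (unit2 1 0) (X 1 0)) (1\<^sub>m d2) + kron (kron (unit2 1 1) (X 1 1)) (1\<^sub>m d2)"

definition on_a2 :: "nat \<Rightarrow> nat \<Rightarrow> (nat \<Rightarrow> nat \<Rightarrow> complex mat) \<Rightarrow> complex mat" where
  "on_a2 d1 d2 X =
       kron (kron (unit2 0 0) (1\<^sub>m d1)) (X 0 0) + kron (kron (unit2 0 1) (1\<^sub>m d1)) (X 0 1)
     + kron (kron (unit2 1 0) (1\<^sub>m d1)) (X 1 0) + kron (kron (unit2 1 1) (1\<^sub>m d1)) (X 1 1)"

definition M_a :: "complex \<Rightarrow> nat \<Rightarrow> nat \<Rightarrow> complex mat" where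
  "M_a s d1 d2 = kron (kron (mat 2 2 (\<lambda>(i,j). if i = j then (if i = 0 then s^2 else inverse (s^2)) else 0))
                     (1\<^sub>m d1)) (1\<^sub>m d2)"

definition trace_a :: "nat \<Rightarrow> complex mat \<Rightarrow> complex mat" where
  "trace_a d P = mat d d (\<lambda>(i,j). P $$ (i, j) + P $$ (d + i, d + j))"

end

theory Submission
  imports Defs
begin


lemma dim_kron[simp]: "dim_row (kron A B) = dim_row A * dim_row B" "dim_col (kron A B) = dim_col A * dim_col B"
  by (simp_all add: kron_def)

lemma kron_carrier[simp]: "A \<in> carrier_mat a b \<Longrightarrow> B \<in> carrier_mat c d \<Longrightarrow> kron A B \<in> carrier_mat (a*c) (b*d)"
  unfolding carrier_mat_def by auto

lemma index_kron[simp]: "i < dim_row A * dim_row B \<Longrightarrow> j < dim_col A * dim_col B \<Longrightarrow>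
  kron A B $$ (i,j) = A $$ (i div dim_row B, j div dim_col B) * B $$ (i mod dim_row B, j mod dim_col B)"
  by (simp add: kron_def)

lemma sum_div_mod_split:
  "(\<Sum>k\<in>{0..<a*b}. f k) = (\<Sum>x\<in>{0..<a}. \<Sum>y\<in>{0..<b}. f (x*b + y))" for a b :: nat
proof (induction a)
  case 0 then show ?case by simp
next
  case (Suc a)
  have "(\<Sum>k\<in>{0..<Suc a*b}. f k) = (\<Sum>k\<in>{0..<a*b}. f k) + (\<Sum>k\<in>{a*b..<a*b+b}. f k)"
    by (simp add: sum.atLeastLessThan_concat add.commute)
  also have "(\<Sum>k\<in>{a*b..<a*b+b}. f k) = (\<Sum>y\<in>{0..<b}. f (a*b + y))"
    using sum.shift_bounds_nat_ivl[of f 0 "a*b" b] by (simp add: add.commute)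
  finally show ?case using Suc by simp
qed

lemma kron_mult:
  assumes "A \<in> carrier_mat a1 a2" "B \<in> carrier_mat b1 b2" "C \<in> carrier_mat a2 c1" "D \<in> carrier_mat b2 d1"
  shows "kron A B * kron C D = kron (A*C) (B*D)"
proof (rule eq_matI)
  have dims: "dim_row A = a1" "dim_col A = a2" "dim_row B = b1" "dim_col B = b2"
    "dim_row C = a2" "dim_col C = c1" "dim_row D = b2" "dim_col D = d1" using assms by auto
  fix i j assume i: "i < dim_row (kron (A*C) (B*D))" and j: "j < dim_col (kron (A*C) (B*D))"
  have i': "i < a1 * b1" and j': "j < c1 * d1" using i j dims by auto
  have b1: "b1 > 0" and d1: "d1 > 0" using i' j' by (auto intro!: gr0I)
  have ia: "i div b1 < a1" and ib: "i mod b1 < b1" and ja: "j div d1 < c1" and jb: "j mod d1 < d1"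
    using i' j' b1 d1 by (auto simp: less_mult_imp_div_less)
  have "(kron A B * kron C D) $$ (i,j) = (\<Sum>k\<in>{0..<a2*b2}. kron A B $$ (i,k) * kron C D $$ (k,j))"
    using i' j' dims by (simp add: scalar_prod_def)
  also have "\<dots> = (\<Sum>x\<in>{0..<a2}. \<Sum>y\<in>{0..<b2}. kron A B $$ (i,x*b2+y) * kron C D $$ (x*b2+y,j))"
    by (rule sum_div_mod_split)
  also have "\<dots> = (\<Sum>x\<in>{0..<a2}. \<Sum>y\<in>{0..<b2}. (A $$ (i div b1, x) * C $$ (x, j div d1)) * (B $$ (i mod b1, y) * D $$ (y, j mod d1)))"
  proof (intro sum.cong refl)
    fix x y assume x: "x \<in> {0..<a2}" and y: "y \<in> {0..<b2}"
    have xy: "x*b2+y < a2*b2"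
    proof -
      have "x*b2 + y < x*b2 + b2" using y by simp
      also have "\<dots> = Suc x * b2" by simp
      also have "\<dots> \<le> a2*b2" using x by (intro mult_le_mono1) auto
      finally show ?thesis .
    qed
    have dv: "(x*b2+y) div b2 = x" "(x*b2+y) mod b2 = y" using y by auto
    show "kron A B $$ (i,x*b2+y) * kron C D $$ (x*b2+y,j) = (A $$ (i div b1, x) * C $$ (x, j div d1)) * (B $$ (i mod b1, y) * D $$ (y, j mod d1))"
      using i' j' xy dv dims by (simp add: ac_simps)
  qed
  also have "\<dots> = (\<Sum>x\<in>{0..<a2}. A $$ (i div b1, x) * C $$ (x, j div d1)) * (\<Sum>y\<in>{0..<b2}. B $$ (i mod b1, y) * D $$ (y, j mod d1))"
    by (simp add: sum_product)
  also have "\<dots> = kron (A*C) (B*D) $$ (i,j)"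
    using i' j' dims ia ib ja jb by (simp add: scalar_prod_def)
  finally show "(kron A B * kron C D) $$ (i,j) = kron (A*C) (B*D) $$ (i,j)" .
qed (use assms in auto)

lemma kron_assoc: "kron (kron A B) C = kron A (kron B C)"
proof (rule eq_matI)
  fix i j assume i: "i < dim_row (kron A (kron B C))" and j: "j < dim_col (kron A (kron B C))"
  let ?rb = "dim_row B" and ?rc = "dim_row C" and ?cb = "dim_col B" and ?cc = "dim_col C"
  have rc: "?rc > 0" "?rb > 0" and cc: "?cc > 0" "?cb > 0" using i j by (auto intro!: gr0I)
  have i1: "i div ?rc < dim_row A * ?rb" using i by (simp add: less_mult_imp_div_less mult.assoc)
  have j1: "j div ?cc < dim_col A * ?cb" using j by (simp add: less_mult_imp_div_less mult.assoc)
  have i0: "i mod (?rb * ?rc) < ?rb * ?rc" using rc by simp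
  have i2: "i mod (?rb * ?rc) div ?rc = i div ?rc mod ?rb"
     "i mod (?rb * ?rc) mod ?rc = i mod ?rc" "i div (?rb * ?rc) = i div ?rc div ?rb"
    using rc by (auto simp: mod_mult2_eq div_mult2_eq mult.commute[of ?rb ?rc])
  have j0: "j mod (?cb * ?cc) < ?cb * ?cc" using cc by simp
  have j2: "j mod (?cb * ?cc) div ?cc = j div ?cc mod ?cb"
     "j mod (?cb * ?cc) mod ?cc = j mod ?cc" "j div (?cb * ?cc) = j div ?cc div ?cb"
    using cc by (auto simp: mod_mult2_eq div_mult2_eq mult.commute[of ?cb ?cc])
  show "kron (kron A B) C $$ (i,j) = kron A (kron B C) $$ (i,j)"
    using i j i1 j1 i0 j0 i2 j2 by (simp add: mult.assoc)
qed auto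

lemma kron_2x2:
  assumes G: "G \<in> carrier_mat 2 2" and P: "P \<in> carrier_mat d d'"
  shows "kron G P = four_block_mat (G$$(0,0) \<cdot>\<^sub>m P) (G$$(0,1) \<cdot>\<^sub>m P) (G$$(1,0) \<cdot>\<^sub>m P) (G$$(1,1) \<cdot>\<^sub>m P)"
proof (rule eq_matI)
  fix i j assume i: "i < dim_row (four_block_mat (G$$(0,0) \<cdot>\<^sub>m P) (G$$(0,1) \<cdot>\<^sub>m P) (G$$(1,0) \<cdot>\<^sub>m P) (G$$(1,1) \<cdot>\<^sub>m P))"
    and j: "j < dim_col (four_block_mat (G$$(0,0) \<cdot>\<^sub>m P) (G$$(0,1) \<cdot>\<^sub>m P) (G$$(1,0) \<cdot>\<^sub>m P) (G$$(1,1) \<cdot>\<^sub>m P))"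
  have i': "i < 2*d" and j': "j < 2*d'" using i j P by auto
  have ii: "(i < d \<and> i div d = 0 \<and> i mod d = i) \<or> (\<not> i < d \<and> i div d = 1 \<and> i mod d = i - d)"
  proof (cases "i < d")
    case False then have "i - d < d" using i' by auto
    then show ?thesis using False by (auto simp: div_if mod_if)
  qed auto
  have jj: "(j < d' \<and> j div d' = 0 \<and> j mod d' = j) \<or> (\<not> j < d' \<and> j div d' = 1 \<and> j mod d' = j - d')"
  proof (cases "j < d'")
    case False then have "j - d' < d'" using j' by auto
    then show ?thesis using False by (auto simp: div_if mod_if)
  qed auto
  show "kron G P $$ (i,j) = four_block_mat (G$$(0,0) \<cdot>\<^sub>m P) (G$$(0,1) \<cdot>\<^sub>m P) (G$$(1,0) \<cdot>\<^sub>m P) (G$$(1,1) \<cdot>\<^sub>m P) $$ (i,j)"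
    using ii jj i' j' carrier_matD[OF G] carrier_matD[OF P] by auto
qed (use G P in auto)

lemma trace_a_four_block:
  assumes "A \<in> carrier_mat d d" "B \<in> carrier_mat d d" "C \<in> carrier_mat d d" "D \<in> carrier_mat d d"
  shows "trace_a d (four_block_mat A B C D) = A + D"
  using carrier_matD[OF assms(1)] carrier_matD[OF assms(4)] by (intro eq_matI) (auto simp: trace_a_def)

lemma kron_add_left: "A \<in> carrier_mat a b \<Longrightarrow> B \<in> carrier_mat a b \<Longrightarrow> kron (A + B) C = kron A C + kron B C"
proof (rule eq_matI)
  assume A: "A \<in> carrier_mat a b" and B: "B \<in> carrier_mat a b"
  fix i j assume i: "i < dim_row (kron A C + kron B C)" and j: "j < dim_col (kron A C + kron B C)"
  have "i div dim_row C < a" "j div dim_col C < b"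
    using i j A B by (auto simp: less_mult_imp_div_less)
  then show "kron (A + B) C $$ (i, j) = (kron A C + kron B C) $$ (i, j)"
    using i j A B by (auto simp: algebra_simps)
qed auto

lemma kron_add_right: "B \<in> carrier_mat a b \<Longrightarrow> C \<in> carrier_mat a b \<Longrightarrow> kron A (B + C) = kron A B + kron A C"
proof (rule eq_matI)
  assume B: "B \<in> carrier_mat a b" and C: "C \<in> carrier_mat a b"
  fix i j assume i: "i < dim_row (kron A B + kron A C)" and j: "j < dim_col (kron A B + kron A C)"
  have "i < dim_row A * a" "j < dim_col A * b" using i j B C by auto
  then have "a > 0" "b > 0" by (auto intro!: gr0I)
  then have "i mod a < a" "j mod b < b" by auto
  then show "kron A (B + C) $$ (i, j) = (kron A B + kron A C) $$ (i, j)"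
    using i j B C by (auto simp: algebra_simps)
qed auto

lemma kron_smult_left: "kron (c \<cdot>\<^sub>m A) B = c \<cdot>\<^sub>m kron A B"
proof (rule eq_matI)
  fix i j assume i: "i < dim_row (c \<cdot>\<^sub>m kron A B)" and j: "j < dim_col (c \<cdot>\<^sub>m kron A B)"
  have "i div dim_row B < dim_row A" "j div dim_col B < dim_col A"
    using i j by (simp_all add: less_mult_imp_div_less)
  then show "kron (c \<cdot>\<^sub>m A) B $$ (i, j) = (c \<cdot>\<^sub>m kron A B) $$ (i, j)"
    using i j by (simp add: mult.assoc)
qed auto

lemma kron_smult_right: "kron A (c \<cdot>\<^sub>m B) = c \<cdot>\<^sub>m kron A B"
proof (rule eq_matI)
  fix i j assume i: "i < dim_row (c \<cdot>\<^sub>m kron A B)" and j: "j < dim_col (c \<cdot>\<^sub>m kron A B)"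
  have "dim_row B > 0" "dim_col B > 0" using i j by (auto intro!: gr0I)
  then have "i mod dim_row B < dim_row B" "j mod dim_col B < dim_col B" by auto
  then show "kron A (c \<cdot>\<^sub>m B) $$ (i, j) = (c \<cdot>\<^sub>m kron A B) $$ (i, j)"
    using i j by (simp add: algebra_simps)
qed auto

lemma kron_zero_left: "kron (0\<^sub>m a b) C = 0\<^sub>m (a * dim_row C) (b * dim_col C)"
proof (rule eq_matI)
  fix i j assume i: "i < dim_row (0\<^sub>m (a * dim_row C) (b * dim_col C) :: complex mat)" and j: "j < dim_col (0\<^sub>m (a * dim_row C) (b * dim_col C) :: complex mat)"
  have "i div dim_row C < a" "j div dim_col C < b"
    using i j by (simp_all add: less_mult_imp_div_less)
  then show "kron (0\<^sub>m a b) C $$ (i, j) = 0\<^sub>m (a * dim_row C) (b * dim_col C) $$ (i, j)"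
    using i j by simp
qed auto

lemma kron_zero_right: "kron A (0\<^sub>m a b) = 0\<^sub>m (dim_row A * a) (dim_col A * b)"
proof (rule eq_matI)
  fix i j assume i: "i < dim_row (0\<^sub>m (dim_row A * a) (dim_col A * b) :: complex mat)" and j: "j < dim_col (0\<^sub>m (dim_row A * a) (dim_col A * b) :: complex mat)"
  have "a > 0" "b > 0" using i j by (auto intro!: gr0I)
  then have "i mod a < a" "j mod b < b" by auto
  then show "kron A (0\<^sub>m a b) $$ (i, j) = 0\<^sub>m (dim_row A * a) (dim_col A * b) $$ (i, j)"
    using i j by simp
qed auto

lemma kron_one: "kron (1\<^sub>m a) (1\<^sub>m b) = 1\<^sub>m (a * b)"
proof (rule eq_matI)
  fix i j assume "i < dim_row (1\<^sub>m (a * b) :: complex mat)" "j < dim_col (1\<^sub>m (a * b) :: complex mat)"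
  then have ij: "i < a*b" "j < a*b" by auto
  then have d: "i div b < a" "j div b < a" by (auto simp: less_mult_imp_div_less mult.commute)
  have "b > 0" using ij by (auto intro!: gr0I)
  then have m: "i mod b < b" "j mod b < b" by auto
  have e: "(i div b = j div b \<and> i mod b = j mod b) = (i = j)"
    by (metis div_mult_mod_eq)
  show "kron (1\<^sub>m a) (1\<^sub>m b) $$ (i, j) = 1\<^sub>m (a * b) $$ (i, j)"
    using ij d m e by auto
qed auto



lemma smult_one_mat': "(1::complex) \<cdot>\<^sub>m A = A" by (rule eq_matI) auto
lemma smult_zero_mat': "(0::complex) \<cdot>\<^sub>m A = 0\<^sub>m (dim_row A) (dim_col A)" by (rule eq_matI) auto

lemma unit2_carrier[simp]: "unit2 a b \<in> carrier_mat 2 2" by (simp add: unit2_def)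
lemma unit2_idx[simp]: "i < 2 \<Longrightarrow> j < 2 \<Longrightarrow> unit2 a b $$ (i,j) = (if i = a \<and> j = b then 1 else 0)"
  by (auto simp: unit2_def)

lemma kron_unit2:
  assumes "P \<in> carrier_mat d d"
  shows "kron (unit2 0 0) P = four_block_mat P (0\<^sub>m d d) (0\<^sub>m d d) (0\<^sub>m d d)"
    "kron (unit2 0 1) P = four_block_mat (0\<^sub>m d d) P (0\<^sub>m d d) (0\<^sub>m d d)"
    "kron (unit2 1 0) P = four_block_mat (0\<^sub>m d d) (0\<^sub>m d d) P (0\<^sub>m d d)"
    "kron (unit2 1 1) P = four_block_mat (0\<^sub>m d d) (0\<^sub>m d d) (0\<^sub>m d d) P"
  using assms by (simp_all add: kron_2x2[OF unit2_carrier assms] smult_one_mat' smult_zero_mat')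

lemma fb_sum4:
  fixes A B C D :: "complex mat"
  assumes "A \<in> carrier_mat d d" "B \<in> carrier_mat d d" "C \<in> carrier_mat d d" "D \<in> carrier_mat d d"
  shows "four_block_mat A (0\<^sub>m d d) (0\<^sub>m d d) (0\<^sub>m d d) + four_block_mat (0\<^sub>m d d) B (0\<^sub>m d d) (0\<^sub>m d d)
   + four_block_mat (0\<^sub>m d d) (0\<^sub>m d d) C (0\<^sub>m d d) + four_block_mat (0\<^sub>m d d) (0\<^sub>m d d) (0\<^sub>m d d) D
   = four_block_mat A B C D"
  by (rule eq_matI) (use assms in auto)

lemma on_a1_fb:
  assumes "\<And>i j. X i j \<in> carrier_mat d d"
  shows "on_a1 d e X = four_block_mat (kron (X 0 0) (1\<^sub>m e)) (kron (X 0 1) (1\<^sub>m e)) (kron (X 1 0) (1\<^sub>m e)) (kron (X 1 1) (1\<^sub>m e))"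
proof -
  have c: "\<And>i j. kron (X i j) (1\<^sub>m e) \<in> carrier_mat (d*e) (d*e)" using assms by simp
  show ?thesis unfolding on_a1_def kron_assoc kron_unit2[OF c] by (rule fb_sum4[OF c c c c])
qed

lemma on_a2_fb:
  assumes "\<And>i j. X i j \<in> carrier_mat e e"
  shows "on_a2 d e X = four_block_mat (kron (1\<^sub>m d) (X 0 0)) (kron (1\<^sub>m d) (X 0 1)) (kron (1\<^sub>m d) (X 1 0)) (kron (1\<^sub>m d) (X 1 1))"
proof -
  have c: "\<And>i j. kron (1\<^sub>m d) (X i j) \<in> carrier_mat (d*e) (d*e)" using assms by simp
  show ?thesis unfolding on_a2_def kron_assoc kron_unit2[OF c] by (rule fb_sum4[OF c c c c])
qed

lemma M_a_fb:
  "M_a s d e = four_block_mat ((s^2) \<cdot>\<^sub>m 1\<^sub>m (d*e)) (0\<^sub>m (d*e) (d*e)) (0\<^sub>m (d*e) (d*e)) (inverse (s^2) \<cdot>\<^sub>m 1\<^sub>m (d*e))"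
proof -
  have c: "kron (1\<^sub>m d) (1\<^sub>m e) \<in> carrier_mat (d*e) (d*e)" by simp
  show ?thesis unfolding M_a_def kron_assoc kron_one
    by (subst kron_2x2[of _ _ "d*e" "d*e"]) (auto simp: smult_zero_mat')
qed



lemma km1: "A \<in> carrier_mat d d \<Longrightarrow> X \<in> carrier_mat e e \<Longrightarrow> kron A (1\<^sub>m e) * kron (1\<^sub>m d) X = kron A X"
  by (subst kron_mult[OF _ one_carrier_mat one_carrier_mat]) auto

lemma km1': "A \<in> carrier_mat d d \<Longrightarrow> X \<in> carrier_mat e e \<Longrightarrow> kron (1\<^sub>m d) X * kron A (1\<^sub>m e) = kron A X"
  by (subst kron_mult[OF one_carrier_mat _ _ one_carrier_mat]) auto

lemma km2: "A \<in> carrier_mat d d \<Longrightarrow> X \<in> carrier_mat e e \<Longrightarrow> R \<in> carrier_mat d d \<Longrightarrow> kron A X * kron R (1\<^sub>m e) = kron (A*R) X"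
  by (subst kron_mult[where D="1\<^sub>m e"]) auto

lemma km3: "A \<in> carrier_mat d d \<Longrightarrow> X \<in> carrier_mat e e \<Longrightarrow> R \<in> carrier_mat d d \<Longrightarrow>
   B \<in> carrier_mat d d \<Longrightarrow> Y \<in> carrier_mat e e \<Longrightarrow>
   (kron A X + kron B Y) * kron R (1\<^sub>m e) = kron (A*R) X + kron (B*R) Y"
  by (subst add_mult_distrib_mat[of _ "d*e" "d*e"]) (auto simp: km2)

lemma T1:
  assumes L: "\<And>i j. L i j \<in> carrier_mat d d" and X: "\<And>i j. X i j \<in> carrier_mat e e"
  shows "on_a1 d e L * on_a2 d e X = four_block_mat
     (kron (L 0 0) (X 0 0) + kron (L 0 1) (X 1 0)) (kron (L 0 0) (X 0 1) + kron (L 0 1) (X 1 1))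
     (kron (L 1 0) (X 0 0) + kron (L 1 1) (X 1 0)) (kron (L 1 0) (X 0 1) + kron (L 1 1) (X 1 1))"
  unfolding on_a1_fb[OF L] on_a2_fb[OF X]
  by (subst mult_four_block_mat[of _ "d*e" "d*e" _ "d*e" _ "d*e" _ _ "d*e" _ "d*e"]) (auto simp: L X km1)

lemma T2:
  assumes L: "\<And>i j. L i j \<in> carrier_mat d d" and X: "\<And>i j. X i j \<in> carrier_mat e e"
    and R: "\<And>i j. R i j \<in> carrier_mat d d"
  shows "four_block_mat
     (kron (L 0 0) (X 0 0) + kron (L 0 1) (X 1 0)) (kron (L 0 0) (X 0 1) + kron (L 0 1) (X 1 1))
     (kron (L 1 0) (X 0 0) + kron (L 1 1) (X 1 0)) (kron (L 1 0) (X 0 1) + kron (L 1 1) (X 1 1))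
    * on_a1 d e R = four_block_mat
     ((kron (L 0 0 * R 0 0) (X 0 0) + kron (L 0 1 * R 0 0) (X 1 0)) + (kron (L 0 0 * R 1 0) (X 0 1) + kron (L 0 1 * R 1 0) (X 1 1)))
     ((kron (L 0 0 * R 0 1) (X 0 0) + kron (L 0 1 * R 0 1) (X 1 0)) + (kron (L 0 0 * R 1 1) (X 0 1) + kron (L 0 1 * R 1 1) (X 1 1)))
     ((kron (L 1 0 * R 0 0) (X 0 0) + kron (L 1 1 * R 0 0) (X 1 0)) + (kron (L 1 0 * R 1 0) (X 0 1) + kron (L 1 1 * R 1 0) (X 1 1)))
     ((kron (L 1 0 * R 0 1) (X 0 0) + kron (L 1 1 * R 0 1) (X 1 0)) + (kron (L 1 0 * R 1 1) (X 0 1) + kron (L 1 1 * R 1 1) (X 1 1)))"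
  unfolding on_a1_fb[OF R]
  by (subst mult_four_block_mat[of _ "d*e" "d*e" _ "d*e" _ "d*e" _ _ "d*e" _ "d*e"]) (auto simp: L X R km3[where d=d])

lemma T3:
  assumes "A \<in> carrier_mat N N" "B \<in> carrier_mat N N" "C \<in> carrier_mat N N" "D \<in> carrier_mat N N"
  shows "trace_a N (four_block_mat A B C D * four_block_mat (a \<cdot>\<^sub>m 1\<^sub>m N) (0\<^sub>m N N) (0\<^sub>m N N) (b \<cdot>\<^sub>m 1\<^sub>m N))
    = (a::complex) \<cdot>\<^sub>m A + b \<cdot>\<^sub>m D"
proof -
  have d: "dim_row A = N" "dim_col A = N" "dim_row B = N" "dim_col B = N" "dim_row C = N" "dim_col C = N" "dim_row D = N" "dim_col D = N"
    using assms by auto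
  have e: "four_block_mat A B C D * four_block_mat (a \<cdot>\<^sub>m 1\<^sub>m N) (0\<^sub>m N N) (0\<^sub>m N N) (b \<cdot>\<^sub>m 1\<^sub>m N)
    = four_block_mat (a \<cdot>\<^sub>m A) (b \<cdot>\<^sub>m B) (a \<cdot>\<^sub>m C) (b \<cdot>\<^sub>m D)"
    by (subst mult_four_block_mat[of _ N N _ N _ N _ _ N _ N]) (auto simp: assms d mult_smult_distrib[of _ N N _ N])
  show ?thesis unfolding e by (rule trace_a_four_block) (auto simp: assms)
qed

lemma kadd: "A \<in> carrier_mat d d \<Longrightarrow> B \<in> carrier_mat d d \<Longrightarrow> X \<in> carrier_mat e e \<Longrightarrow> kron A X + kron B X = kron (A + B) X"
  by (simp add: kron_add_left)
lemma kadd': "A \<in> carrier_mat d d \<Longrightarrow> B \<in> carrier_mat e e \<Longrightarrow> X \<in> carrier_mat e e \<Longrightarrow> kron A X + kron A B = kron A (X + B)"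
  by (simp add: kron_add_right)

lemma T4:
  assumes L: "\<And>i j. L i j \<in> carrier_mat d d" and R: "\<And>i j. R i j \<in> carrier_mat d d"
  shows "on_a1 d e L * on_a1 d e R = four_block_mat
     (kron (L 0 0 * R 0 0 + L 0 1 * R 1 0) (1\<^sub>m e)) (kron (L 0 0 * R 0 1 + L 0 1 * R 1 1) (1\<^sub>m e))
     (kron (L 1 0 * R 0 0 + L 1 1 * R 1 0) (1\<^sub>m e)) (kron (L 1 0 * R 0 1 + L 1 1 * R 1 1) (1\<^sub>m e))"
proof -
  have LR: "\<And>i j k l. L i j * R k l \<in> carrier_mat d d" using L R by (meson mult_carrier_mat)
  show ?thesis
  unfolding on_a1_fb[OF L] on_a1_fb[OF R]
  by (subst mult_four_block_mat[of _ "d*e" "d*e" _ "d*e" _ "d*e" _ _ "d*e" _ "d*e"]) (auto simp: L R km2[where d=d] kadd[where d=d and e=e] LR)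
qed

lemma T5:
  assumes X: "\<And>i j. X i j \<in> carrier_mat e e" and Y: "\<And>i j. Y i j \<in> carrier_mat e e"
  shows "on_a2 d e X * on_a2 d e Y = on_a2 d e (\<lambda>i j. X i 0 * Y 0 j + X i 1 * Y 1 j)"
proof -
  have km: "\<And>A B. A \<in> carrier_mat e e \<Longrightarrow> B \<in> carrier_mat e e \<Longrightarrow> kron (1\<^sub>m d) A * kron (1\<^sub>m d) B = kron (1\<^sub>m d) (A * B)"
    by (subst kron_mult[OF one_carrier_mat _ one_carrier_mat]) auto
  have c: "\<And>i j. X i 0 * Y 0 j + X i 1 * Y 1 j \<in> carrier_mat e e" using X Y by (meson add_carrier_mat mult_carrier_mat)
  have XY: "\<And>i j k l. X i j * Y k l \<in> carrier_mat e e" using X Y by (meson mult_carrier_mat)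
  show ?thesis
  unfolding on_a2_fb[OF X] on_a2_fb[OF Y] on_a2_fb[OF c]
  by (subst mult_four_block_mat[of _ "d*e" "d*e" _ "d*e" _ "d*e" _ _ "d*e" _ "d*e"]) (auto simp: X Y km kadd'[where d=d and e=e] XY)
qed



lemma qH_carrier[simp]: "spin_qH s n a b \<in> carrier_mat (n+1) (n+1)" by (simp add: spin_qH_def)
lemma F_carrier[simp]: "spin_F s n \<in> carrier_mat (n+1) (n+1)" by (simp add: spin_F_def)
lemma E_carrier[simp]: "spin_E n \<in> carrier_mat (n+1) (n+1)" by (simp add: spin_E_def)
lemma qH_carrier'[simp]: "spin_qH s n a b \<in> carrier_mat (Suc n) (Suc n)" by (simp add: spin_qH_def)
lemma F_carrier'[simp]: "spin_F s n \<in> carrier_mat (Suc n) (Suc n)" by (simp add: spin_F_def)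
lemma E_carrier'[simp]: "spin_E n \<in> carrier_mat (Suc n) (Suc n)" by (simp add: spin_E_def)
lemma dims_spin[simp]: "dim_row (spin_qH s n a b) = Suc n" "dim_col (spin_qH s n a b) = Suc n"
  "dim_row (spin_F s n) = Suc n" "dim_col (spin_F s n) = Suc n" "dim_row (spin_E n) = Suc n" "dim_col (spin_E n) = Suc n"
  by (simp_all add: spin_qH_def spin_F_def spin_E_def)
lemma Lp_carrier[simp]: "L_plus s n i j \<in> carrier_mat (n+1) (n+1)" by (simp add: L_plus_def)
lemma Lm_carrier[simp]: "L_minus s n i j \<in> carrier_mat (n+1) (n+1)" by (simp add: L_minus_def)

lemma sum_delta_mult: "(\<Sum>k\<in>{0..<(m::nat)}. (if i = k then v else 0) * f k) = (if i < m then v * f i else (0::complex))"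
proof -
  have "\<And>k. (if i = k then v else 0) * f k = (if i = k then v * f i else 0)" by simp
  then show ?thesis by (simp add: sum.delta')
qed
lemma sum_delta_mult': "(\<Sum>k\<in>{0..<(m::nat)}. f k * (if k = j then v else 0)) = (if j < m then f j * v else (0::complex))"
proof -
  have "\<And>k. f k * (if k = j then v else 0) = (if k = j then f j * v else 0)" by simp
  then show ?thesis by (simp add: sum.delta)
qed

lemma qH_idx: "i < n+1 \<Longrightarrow> j < n+1 \<Longrightarrow> spin_qH s n a b $$ (i,j) = (if i = j then s powi (a * (2 * int i - int n) + 2 * b) else 0)"
  by (simp add: spin_qH_def)

lemma mult_idx: "i < dim_row A \<Longrightarrow> j < dim_col B \<Longrightarrow> dim_col A = dim_row B \<Longrightarrow>
  (A*B)$$(i,j) = (\<Sum>k\<in>{0..<dim_row B}. A$$(i,k) * B$$(k,j))"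
  by (simp add: scalar_prod_def)

lemma e_qHF: "i < n+1 \<Longrightarrow> j < n+1 \<Longrightarrow> (spin_qH s n a b * spin_F s n) $$ (i,j)
   = s powi (a * (2 * int i - int n) + 2 * b) * spin_F s n $$ (i,j)"
proof -
  assume i: "i < n+1" and j: "j < n+1"
  have "(spin_qH s n a b * spin_F s n) $$ (i,j) = (\<Sum>k\<in>{0..<n+1}. (if i = k then s powi (a * (2 * int i - int n) + 2 * b) else 0) * spin_F s n $$ (k,j))"
    using i j by (subst mult_idx) (auto simp: qH_idx intro!: sum.cong)
  also have "\<dots> = s powi (a * (2 * int i - int n) + 2 * b) * spin_F s n $$ (i,j)"
    by (subst sum_delta_mult) (use i in simp)
  finally show ?thesis .
qed

lemma e_FqH: "i < n+1 \<Longrightarrow> j < n+1 \<Longrightarrow> (spin_F s n * spin_qH s n a b) $$ (i,j)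
   = spin_F s n $$ (i,j) * s powi (a * (2 * int j - int n) + 2 * b)"
proof -
  assume i: "i < n+1" and j: "j < n+1"
  have "(spin_F s n * spin_qH s n a b) $$ (i,j) = (\<Sum>k\<in>{0..<n+1}. spin_F s n $$ (i,k) * (if k = j then s powi (a * (2 * int j - int n) + 2 * b) else 0))"
    using i j by (subst mult_idx) (auto simp: qH_idx intro!: sum.cong)
  also have "\<dots> = spin_F s n $$ (i,j) * s powi (a * (2 * int j - int n) + 2 * b)"
    by (subst sum_delta_mult') (use j in simp)
  finally show ?thesis .
qed

lemma F_idx_nz: "i < n+1 \<Longrightarrow> j < n+1 \<Longrightarrow> spin_F s n $$ (i,j) \<noteq> 0 \<Longrightarrow> j = i + 1"
  by (simp add: spin_F_def split: if_splits)

lemma qH_mult: assumes "s \<noteq> 0"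
  shows "spin_qH s n a b * spin_qH s n a' b' = spin_qH s n (a+a') (b+b')"
proof (rule eq_matI)
  fix i j assume i: "i < dim_row (spin_qH s n (a+a') (b+b'))" and j: "j < dim_col (spin_qH s n (a+a') (b+b'))"
  then have i': "i < n+1" and j': "j < n+1" by (auto simp: spin_qH_def)
  have "(spin_qH s n a b * spin_qH s n a' b') $$ (i,j) = (\<Sum>k\<in>{0..<n+1}. (if i = k then s powi (a * (2 * int i - int n) + 2 * b) else 0) * spin_qH s n a' b' $$ (k,j))"
    using i' j' by (auto simp: scalar_prod_def qH_idx intro!: sum.cong)
  also have "\<dots> = s powi (a * (2 * int i - int n) + 2 * b) * spin_qH s n a' b' $$ (i,j)"
    by (subst sum_delta_mult) (use i' in simp)
  also have "\<dots> = spin_qH s n (a+a') (b+b') $$ (i,j)"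
    using i' j' assms by (simp add: qH_idx power_int_add[symmetric] algebra_simps)
  finally show "(spin_qH s n a b * spin_qH s n a' b') $$ (i,j) = spin_qH s n (a+a') (b+b') $$ (i,j)" .
qed (auto simp: spin_qH_def)

lemma qH_00: "spin_qH s n 0 0 = 1\<^sub>m (n+1)"
  by (rule eq_matI) (auto simp: spin_qH_def)

lemma F_K: assumes "s \<noteq> 0"
  shows "spin_F s n * spin_qH s n a 0 = (s powi (2*a)) \<cdot>\<^sub>m (spin_qH s n a 0 * spin_F s n)"
proof (rule eq_matI)
  fix i j assume i: "i < dim_row (s powi (2*a) \<cdot>\<^sub>m (spin_qH s n a 0 * spin_F s n))" and j: "j < dim_col (s powi (2*a) \<cdot>\<^sub>m (spin_qH s n a 0 * spin_F s n))"
  then have i': "i < n+1" and j': "j < n+1" by (auto simp: spin_qH_def spin_F_def)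
  show "(spin_F s n * spin_qH s n a 0) $$ (i,j) = (s powi (2*a) \<cdot>\<^sub>m (spin_qH s n a 0 * spin_F s n)) $$ (i,j)"
  proof (cases "spin_F s n $$ (i,j) = 0")
    case True then show ?thesis using i' j' by (simp add: e_FqH e_qHF del: index_mult_mat(1))
  next
    case False
    then have ji: "j = i + 1" using F_idx_nz i' j' by blast
    have "a * (2 * int j - int n) = 2 * a + a * (2 * int i - int n)" using ji by (simp add: algebra_simps)
    then have "s powi (a * (2 * int j - int n)) = s powi (2*a) * s powi (a * (2 * int i - int n))"
      using assms by (simp add: power_int_add)
    then show ?thesis using i' j' by (simp add: e_FqH e_qHF del: index_mult_mat(1))
  qed
qed (auto simp: spin_qH_def spin_F_def)

lemma qH_shift: assumes "s \<noteq> 0"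
  shows "spin_qH s n a (b + 1) = s^2 \<cdot>\<^sub>m spin_qH s n a b" "spin_qH s n a (b - 1) = inverse (s^2) \<cdot>\<^sub>m spin_qH s n a b"
proof -
  have p: "\<And>x. s powi (x + 2) = s^2 * s powi x" "\<And>x. s powi (x - 2) = inverse (s^2) * s powi x"
    using assms by (simp_all add: power_int_add power_int_diff field_simps)
  have q1: "\<And>i. s powi (a * (2 * int i - int n) + 2 * (b + 1)) = s^2 * s powi (a * (2 * int i - int n) + 2 * b)"
    using p(1) by (metis add.assoc distrib_left mult.right_neutral)
  have q2: "\<And>i. s powi (a * (2 * int i - int n) + 2 * (b - 1)) = inverse (s^2) * s powi (a * (2 * int i - int n) + 2 * b)"
  proof -
    fix i
    have "a * (2 * int i - int n) + 2 * (b - 1) = (a * (2 * int i - int n) + 2 * b) - 2" by (simp add: algebra_simps)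
    then show "?thesis i" using p(2)[of "a * (2 * int i - int n) + 2 * b"] by (simp only:)
  qed
  show "spin_qH s n a (b + 1) = s^2 \<cdot>\<^sub>m spin_qH s n a b" "spin_qH s n a (b - 1) = inverse (s^2) \<cdot>\<^sub>m spin_qH s n a b"
  proof -
    have r1: "\<And>x. s powi (x + (2*b+2)) = s^2 * s powi (x + 2*b)" using p(1) by (metis add.assoc add.commute)
    have r2: "\<And>x. s powi (x + (2*b-2)) = inverse (s^2) * s powi (x + 2*b)"
      using p(2) by (metis add_diff_eq)
    show "spin_qH s n a (b + 1) = s^2 \<cdot>\<^sub>m spin_qH s n a b" "spin_qH s n a (b - 1) = inverse (s^2) \<cdot>\<^sub>m spin_qH s n a b"
      by (rule eq_matI; auto simp: qH_idx q1 q2 r1 r2)+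
  qed
qed



lemma KK': assumes "s \<noteq> 0"
  shows "spin_qH s n 1 0 * spin_qH s n (-1) 0 = 1\<^sub>m (n+1)" "spin_qH s n (-1) 0 * spin_qH s n 1 0 = 1\<^sub>m (n+1)"
  using qH_mult[OF assms, of n 1 0 "-1" 0] qH_mult[OF assms, of n "-1" 0 1 0] by (simp_all add: qH_00)

lemma V2: assumes "s \<noteq> 0"
  shows "spin_qH s n 1 0 * ((-(c*s^2)) \<cdot>\<^sub>m spin_F s n) + (c \<cdot>\<^sub>m spin_F s n) * spin_qH s n 1 0 = 0\<^sub>m (n+1) (n+1)"
proof -
  have "spin_qH s n 1 0 * ((-(c*s^2)) \<cdot>\<^sub>m spin_F s n) + (c \<cdot>\<^sub>m spin_F s n) * spin_qH s n 1 0
     = (-(c*s^2)) \<cdot>\<^sub>m (spin_qH s n 1 0 * spin_F s n) + c \<cdot>\<^sub>m (spin_F s n * spin_qH s n 1 0)"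
    by (simp add: mult_smult_distrib[of _ "n+1" "n+1" _ "n+1"] mult_smult_assoc_mat[of _ "n+1" "n+1" _ "n+1"])
  also have "\<dots> = (-(c*s^2)) \<cdot>\<^sub>m (spin_qH s n 1 0 * spin_F s n) + c \<cdot>\<^sub>m ((s powi 2) \<cdot>\<^sub>m (spin_qH s n 1 0 * spin_F s n))"
    using F_K[OF assms, of n 1] by simp
  also have "\<dots> = 0\<^sub>m (n+1) (n+1)"
    by (rule eq_matI) (auto simp: algebra_simps)
  finally show ?thesis .
qed

lemma V3: assumes "s \<noteq> 0"
  shows "spin_qH s n (-1) 0 * (c \<cdot>\<^sub>m spin_F s n) + ((-(c*s^2)) \<cdot>\<^sub>m spin_F s n) * spin_qH s n (-1) 0 = 0\<^sub>m (n+1) (n+1)"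
proof -
  have "spin_qH s n (-1) 0 * (c \<cdot>\<^sub>m spin_F s n) + ((-(c*s^2)) \<cdot>\<^sub>m spin_F s n) * spin_qH s n (-1) 0
     = c \<cdot>\<^sub>m (spin_qH s n (-1) 0 * spin_F s n) + (-(c*s^2)) \<cdot>\<^sub>m (spin_F s n * spin_qH s n (-1) 0)"
    by (simp add: mult_smult_distrib[of _ "n+1" "n+1" _ "n+1"] mult_smult_assoc_mat[of _ "n+1" "n+1" _ "n+1"])
  also have "\<dots> = c \<cdot>\<^sub>m (spin_qH s n (-1) 0 * spin_F s n) + (-(c*s^2)) \<cdot>\<^sub>m ((s powi (-2)) \<cdot>\<^sub>m (spin_qH s n (-1) 0 * spin_F s n))"
    using F_K[OF assms, of n "-1"] by simp
  also have "\<dots> = 0\<^sub>m (n+1) (n+1)"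
    using assms by (intro eq_matI) (auto simp: algebra_simps power_int_minus field_simps)
  finally show ?thesis .
qed

lemma Z1: assumes "s \<noteq> 0"
  shows "(c \<cdot>\<^sub>m spin_F s n) * spin_qH s n (-1) 0 = (c * inverse (s^2)) \<cdot>\<^sub>m (spin_qH s n (-1) 0 * spin_F s n)"
proof -
  have "(c \<cdot>\<^sub>m spin_F s n) * spin_qH s n (-1) 0 = c \<cdot>\<^sub>m (spin_F s n * spin_qH s n (-1) 0)"
    by (simp add: mult_smult_assoc_mat[of _ "n+1" "n+1" _ "n+1"])
  also have "\<dots> = c \<cdot>\<^sub>m ((s powi (-2)) \<cdot>\<^sub>m (spin_qH s n (-1) 0 * spin_F s n))"
    using F_K[OF assms, of n "-1"] by simp
  also have "\<dots> = (c * inverse (s^2)) \<cdot>\<^sub>m (spin_qH s n (-1) 0 * spin_F s n)"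
    by (intro eq_matI) (auto simp: power_int_minus)
  finally show ?thesis .
qed

lemma Z2: "spin_qH s n (-1) 0 * ((-(c*s^2)) \<cdot>\<^sub>m spin_F s n) = (-(c*s^2)) \<cdot>\<^sub>m (spin_qH s n (-1) 0 * spin_F s n)"
  by (simp add: mult_smult_distrib[of _ "n+1" "n+1" _ "n+1"])

lemma casimir_alt: assumes "s \<noteq> 0"
  shows "casimir_Q s n = s^2 \<cdot>\<^sub>m (spin_qH s n 1 0 * spin_qH s n 1 0 + (((s^2 - inverse (s^2)) / s) \<cdot>\<^sub>m spin_F s n) * (((s^2 - inverse (s^2)) / s) \<cdot>\<^sub>m spin_E n))
     + inverse (s^2) \<cdot>\<^sub>m (0\<^sub>m (n+1) (n+1) * 0\<^sub>m (n+1) (n+1) + spin_qH s n (-1) 0 * spin_qH s n (-1) 0)"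
proof -
  have a: "spin_qH s n 1 0 * spin_qH s n 1 0 = spin_qH s n 2 0" "spin_qH s n (-1) 0 * spin_qH s n (-1) 0 = spin_qH s n (-2) 0"
    using qH_mult[OF assms, of n 1 0 1 0] qH_mult[OF assms, of n "-1" 0 "-1" 0] by simp_all
  have b: "spin_qH s n 2 1 = s^2 \<cdot>\<^sub>m spin_qH s n 2 0" "spin_qH s n (-2) (-1) = inverse (s^2) \<cdot>\<^sub>m spin_qH s n (-2) 0"
    using qH_shift[OF assms, of n 2 0] qH_shift[OF assms, of n "-2" 0] by simp_all
  have m: "(((s^2 - inverse (s^2)) / s) \<cdot>\<^sub>m spin_F s n) * (((s^2 - inverse (s^2)) / s) \<cdot>\<^sub>m spin_E n)
     = (((s^2 - inverse (s^2)) / s) * ((s^2 - inverse (s^2)) / s)) \<cdot>\<^sub>m (spin_F s n * spin_E n)"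
    by (simp add: mult_smult_distrib[of _ "n+1" "n+1" _ "n+1"] mult_smult_assoc_mat[of _ "n+1" "n+1" _ "n+1"]) (intro eq_matI; simp)
  have k: "s^2 * (((s^2 - inverse (s^2)) / s) * ((s^2 - inverse (s^2)) / s)) = (s^2 - inverse (s^2))^2"
    using assms by (simp add: field_simps power2_eq_square)
  show ?thesis unfolding casimir_Q_def a b m
    by (rule eq_matI) (auto simp: algebra_simps k[symmetric])
qed



lemma G:
  assumes s0: "s \<noteq> 0" and W: "W \<in> carrier_mat d d" and X: "X00 \<in> carrier_mat e e" "X01 \<in> carrier_mat e e" "X10 \<in> carrier_mat e e" "X11 \<in> carrier_mat e e"
  shows "kron (1\<^sub>m d) (s^2 \<cdot>\<^sub>m X00 + inverse (s^2) \<cdot>\<^sub>m X11) =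
    s^2 \<cdot>\<^sub>m ((kron (1\<^sub>m d) X00 + kron ((c * inverse (s^2)) \<cdot>\<^sub>m W) X10) + (kron (0\<^sub>m d d) X01 + kron (0\<^sub>m d d) X11))
    + inverse (s^2) \<cdot>\<^sub>m ((kron (0\<^sub>m d d) X00 + kron ((-(c*s^2)) \<cdot>\<^sub>m W) X10) + (kron (0\<^sub>m d d) X01 + kron (1\<^sub>m d) X11))"
proof (rule eq_matI)
  have dims: "dim_row W = d" "dim_col W = d" "dim_row X00 = e" "dim_col X00 = e" "dim_row X01 = e" "dim_col X01 = e"
    "dim_row X10 = e" "dim_col X10 = e" "dim_row X11 = e" "dim_col X11 = e" using W X by auto
  fix i j assume i: "i < dim_row (s^2 \<cdot>\<^sub>m ((kron (1\<^sub>m d) X00 + kron ((c * inverse (s^2)) \<cdot>\<^sub>m W) X10) + (kron (0\<^sub>m d d) X01 + kron (0\<^sub>m d d) X11))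
    + inverse (s^2) \<cdot>\<^sub>m ((kron (0\<^sub>m d d) X00 + kron ((-(c*s^2)) \<cdot>\<^sub>m W) X10) + (kron (0\<^sub>m d d) X01 + kron (1\<^sub>m d) X11)))"
    and j: "j < dim_col (s^2 \<cdot>\<^sub>m ((kron (1\<^sub>m d) X00 + kron ((c * inverse (s^2)) \<cdot>\<^sub>m W) X10) + (kron (0\<^sub>m d d) X01 + kron (0\<^sub>m d d) X11))
    + inverse (s^2) \<cdot>\<^sub>m ((kron (0\<^sub>m d d) X00 + kron ((-(c*s^2)) \<cdot>\<^sub>m W) X10) + (kron (0\<^sub>m d d) X01 + kron (1\<^sub>m d) X11)))"
  have i': "i < d * e" and j': "j < d * e" using i j dims by auto
  have e0: "e > 0" using i' by (auto intro!: gr0I)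
  have q: "i div e < d" "j div e < d" "i mod e < e" "j mod e < e"
    using i' j' e0 by (auto simp: less_mult_imp_div_less)
  show "kron (1\<^sub>m d) (s^2 \<cdot>\<^sub>m X00 + inverse (s^2) \<cdot>\<^sub>m X11) $$ (i,j) = (s^2 \<cdot>\<^sub>m ((kron (1\<^sub>m d) X00 + kron ((c * inverse (s^2)) \<cdot>\<^sub>m W) X10) + (kron (0\<^sub>m d d) X01 + kron (0\<^sub>m d d) X11))
    + inverse (s^2) \<cdot>\<^sub>m ((kron (0\<^sub>m d d) X00 + kron ((-(c*s^2)) \<cdot>\<^sub>m W) X10) + (kron (0\<^sub>m d d) X01 + kron (1\<^sub>m d) X11))) $$ (i,j)"
    using i' j' q dims s0 by (simp add: field_simps power2_eq_square)
next
  show "dim_row (kron (1\<^sub>m d) (s^2 \<cdot>\<^sub>m X00 + inverse (s^2) \<cdot>\<^sub>m X11)) = dim_row (s^2 \<cdot>\<^sub>m ((kron (1\<^sub>m d) X00 + kron ((c * inverse (s^2)) \<cdot>\<^sub>m W) X10) + (kron (0\<^sub>m d d) X01 + kron (0\<^sub>m d d) X11))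
    + inverse (s^2) \<cdot>\<^sub>m ((kron (0\<^sub>m d d) X00 + kron ((-(c*s^2)) \<cdot>\<^sub>m W) X10) + (kron (0\<^sub>m d d) X01 + kron (1\<^sub>m d) X11)))"
    using X by simp
  show "dim_col (kron (1\<^sub>m d) (s^2 \<cdot>\<^sub>m X00 + inverse (s^2) \<cdot>\<^sub>m X11)) = dim_col (s^2 \<cdot>\<^sub>m ((kron (1\<^sub>m d) X00 + kron ((c * inverse (s^2)) \<cdot>\<^sub>m W) X10) + (kron (0\<^sub>m d d) X01 + kron (0\<^sub>m d d) X11))
    + inverse (s^2) \<cdot>\<^sub>m ((kron (0\<^sub>m d d) X00 + kron ((-(c*s^2)) \<cdot>\<^sub>m W) X10) + (kron (0\<^sub>m d d) X01 + kron (1\<^sub>m d) X11)))"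
    using X by simp
qed

theorem propositionB1:
  fixes s :: complex and n1 n2 :: nat
  assumes "s \<noteq> 0"
    and "\<forall>k::nat. k > 0 \<longrightarrow> (s^2)^k \<noteq> 1"
  shows "\<exists>Linv.
           inverts_mat (on_a1 (n1+1) (n2+1) (L_plus s n1)) Linv
         \<and> inverts_mat Linv (on_a1 (n1+1) (n2+1) (L_plus s n1))
         \<and> kron (1\<^sub>m (n1+1)) (casimir_Q s n2)
             = trace_a ((n1+1) * (n2+1))
                 (on_a1 (n1+1) (n2+1) (L_plus s n1) * on_a2 (n1+1) (n2+1) (L_plus s n2)
                  * on_a2 (n1+1) (n2+1) (L_minus s n2) * Linv * M_a s (n1+1) (n2+1))"
proof -
  note s0 = assms(1)
  define d where "d = n1 + 1"
  define e where "e = n2 + 1"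
  define c where "c = (s^2 - inverse (s^2)) / s"
  define K where "K = spin_qH s n1 1 0"
  define K' where "K' = spin_qH s n1 (-1) 0"
  define F where "F = spin_F s n1"
  define R where "R = (\<lambda>(i::nat) (j::nat). if i = 0 \<and> j = 0 then K' else if i = 0 \<and> j = 1 then (-(c*s^2)) \<cdot>\<^sub>m F
      else if i = 1 \<and> j = 0 then 0\<^sub>m d d else K)"
  have Kc: "K \<in> carrier_mat d d" "K' \<in> carrier_mat d d" "F \<in> carrier_mat d d"
    unfolding K_def K'_def F_def d_def by simp_all
  have Rc: "\<And>i j. R i j \<in> carrier_mat d d" unfolding R_def using Kc by auto
  have Lc: "\<And>i j. L_plus s n1 i j \<in> carrier_mat d d" unfolding d_def by (rule Lp_carrier)
  have Lv: "L_plus s n1 0 0 = K" "L_plus s n1 0 1 = c \<cdot>\<^sub>m F" "L_plus s n1 1 0 = 0\<^sub>m d d" "L_plus s n1 1 1 = K'"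
    unfolding L_plus_def K_def K'_def F_def c_def d_def by simp_all
  have Rv: "R 0 0 = K'" "R 0 1 = (-(c*s^2)) \<cdot>\<^sub>m F" "R 1 0 = 0\<^sub>m d d" "R 1 1 = K"
    unfolding R_def by simp_all
  have KK: "K * K' = 1\<^sub>m d" "K' * K = 1\<^sub>m d" unfolding K_def K'_def d_def using KK'[OF s0] by simp_all
  have v2: "K * ((-(c*s^2)) \<cdot>\<^sub>m F) + (c \<cdot>\<^sub>m F) * K = 0\<^sub>m d d"
    unfolding K_def F_def d_def by (rule V2[OF s0])
  have v3: "K' * (c \<cdot>\<^sub>m F) + ((-(c*s^2)) \<cdot>\<^sub>m F) * K' = 0\<^sub>m d d"
    unfolding K'_def F_def d_def by (rule V3[OF s0])
  have dimL: "dim_row (on_a1 d e (L_plus s n1)) = d*e + d*e" "dim_row (on_a1 d e R) = d*e + d*e"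
    unfolding on_a1_fb[OF Lc] on_a1_fb[OF Rc] by (simp_all add: carrier_matD[OF Lc] carrier_matD[OF Rc])
  have inv1: "inverts_mat (on_a1 d e (L_plus s n1)) (on_a1 d e R)"
    unfolding inverts_mat_def dimL T4[OF Lc Rc] Lv Rv
    using Kc by (simp add: KK v2 kron_one kron_zero_left)
  have inv2: "inverts_mat (on_a1 d e R) (on_a1 d e (L_plus s n1))"
    unfolding inverts_mat_def dimL T4[OF Rc Lc] Lv Rv
    using Kc by (simp add: KK v3 kron_one kron_zero_left)
  have Pc: "\<And>i j. L_plus s n2 i j \<in> carrier_mat e e" unfolding e_def by (rule Lp_carrier)
  have Mc: "\<And>i j. L_minus s n2 i j \<in> carrier_mat e e" unfolding e_def by (rule Lm_carrier)
  define X where "X = (\<lambda>i j. L_plus s n2 i 0 * L_minus s n2 0 j + L_plus s n2 i 1 * L_minus s n2 1 j)"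
  have Xc: "\<And>i j. X i j \<in> carrier_mat e e" unfolding X_def using Pc Mc by (meson add_carrier_mat mult_carrier_mat)
  have c1: "\<And>L. (\<And>i j. L i j \<in> carrier_mat d d) \<Longrightarrow> on_a1 d e L \<in> carrier_mat (d*e+d*e) (d*e+d*e)"
    by (subst on_a1_fb) (auto intro!: four_block_carrier_mat)
  have c2: "\<And>L. (\<And>i j. L i j \<in> carrier_mat e e) \<Longrightarrow> on_a2 d e L \<in> carrier_mat (d*e+d*e) (d*e+d*e)"
    by (subst on_a2_fb) (auto intro!: four_block_carrier_mat)
  have step1: "on_a1 d e (L_plus s n1) * on_a2 d e (L_plus s n2) * on_a2 d e (L_minus s n2) = on_a1 d e (L_plus s n1) * on_a2 d e X"
    unfolding X_def by (subst assoc_mult_mat[OF c1[OF Lc] c2[OF Pc] c2[OF Mc]]) (simp add: T5[where X="L_plus s n2" and Y="L_minus s n2", OF Pc Mc])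
  have step2: "trace_a (d*e) (on_a1 d e (L_plus s n1) * on_a2 d e X * on_a1 d e R * M_a s d e)
    = s^2 \<cdot>\<^sub>m ((kron (L_plus s n1 0 0 * R 0 0) (X 0 0) + kron (L_plus s n1 0 1 * R 0 0) (X 1 0)) + (kron (L_plus s n1 0 0 * R 1 0) (X 0 1) + kron (L_plus s n1 0 1 * R 1 0) (X 1 1)))
      + inverse (s^2) \<cdot>\<^sub>m ((kron (L_plus s n1 1 0 * R 0 1) (X 0 0) + kron (L_plus s n1 1 1 * R 0 1) (X 1 0)) + (kron (L_plus s n1 1 0 * R 1 1) (X 0 1) + kron (L_plus s n1 1 1 * R 1 1) (X 1 1)))"
    unfolding T1[where L="L_plus s n1" and X=X, OF Lc Xc] unfolding T2[where L="L_plus s n1" and X=X and R=R, OF Lc Xc Rc] M_a_fb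
    by (rule T3) (use Lc Xc Rc in \<open>meson add_carrier_mat mult_carrier_mat kron_carrier\<close>)+
  have W: "K' * F \<in> carrier_mat d d" using Kc by simp
  have z1: "(c \<cdot>\<^sub>m F) * K' = (c * inverse (s^2)) \<cdot>\<^sub>m (K' * F)" unfolding F_def K'_def by (rule Z1[OF s0])
  have z2: "K' * ((-(c*s^2)) \<cdot>\<^sub>m F) = (-(c*s^2)) \<cdot>\<^sub>m (K' * F)" unfolding F_def K'_def by (rule Z2)
  have z0: "K * 0\<^sub>m d d = 0\<^sub>m d d" "(c \<cdot>\<^sub>m F) * 0\<^sub>m d d = 0\<^sub>m d d" "0\<^sub>m d d * ((-(c*s^2)) \<cdot>\<^sub>m F) = 0\<^sub>m d d" "0\<^sub>m d d * K = 0\<^sub>m d d"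
    using Kc by auto
  have cas: "casimir_Q s n2 = s^2 \<cdot>\<^sub>m X 0 0 + inverse (s^2) \<cdot>\<^sub>m X 1 1"
    unfolding X_def casimir_alt[OF s0] L_plus_def L_minus_def by simp
  have main: "kron (1\<^sub>m d) (casimir_Q s n2) = trace_a (d*e) (on_a1 d e (L_plus s n1) * on_a2 d e (L_plus s n2) * on_a2 d e (L_minus s n2) * on_a1 d e R * M_a s d e)"
    unfolding step1 step2 Lv Rv KK z1 z2 z0 cas
    by (rule G[OF s0 W Xc Xc Xc Xc])
  show ?thesis
    using inv1 inv2 main unfolding d_def e_def by blast
qed


end
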